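(* Let $\mu>0$, $\sigma\ge0$, and let $A$ be the randomized single-item mechanism that posts price $\frac{1}{2}\mu$ with probability $\frac12$ and price $\mu+\frac{\sigma^2}{\mu}$ with probability $\frac12$. Then for every distribution $F$ supported on exactly two points, with mean $\mu$ and variance exactly $\sigma^2$, we have $\mathrm{REV}(A;F)\ge\frac14\,\mathrm{OPT}(F)$.
   Context: Single item, single buyer with nonnegative value $X\sim F$; the buyer buys iff $X$ is at least the posted price. $\mathrm{REV}(p;F)=p\Pr[X\ge p]$, for a distribution $A$ over prices $\mathrm{REV}(A;F)=\mathbb{E}_{p\sim A}[\mathrm{REV}(p;F)]$, and $\mathrm{OPT}(F)=\sup_{p\ge0}\mathrm{REV}(p;F)$. *)

theory Defs
  imports "HOL-Probability.Probability"
begin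

definition REV :: "real \<Rightarrow> real pmf \<Rightarrow> real" where
  "REV p F = p * measure_pmf.prob F {x. x \<ge> p}"

definition REV_mech :: "real pmf \<Rightarrow> real pmf \<Rightarrow> real" where
  "REV_mech A F = measure_pmf.expectation A (\<lambda>p. REV p F)"

definition OPT :: "real pmf \<Rightarrow> real" where
  "OPT F = (SUP p\<in>{0..}. REV p F)"

definition mechA :: "real \<Rightarrow> real \<Rightarrow> real pmf" where
  "mechA \<mu> \<sigma> = map_pmf (\<lambda>b. if b then \<mu> / 2 else \<mu> + \<sigma>^2 / \<mu>) (bernoulli_pmf (1/2))"

end

theory Submission
  imports Defs
begin

lemma key:
  fixes a b q m h p :: real
  assumes ab: "0 \<le> a" "a < b" and q: "0 < q" "q < 1" and m: "m = q*a+(1-q)*b"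
    and hm: "h*m = q*a^2+(1-q)*b^2" and p: "p \<ge> 0"
  defines "R \<equiv> \<lambda>x. x*(if x\<le>a then 1 else if x\<le>b then 1-q else (0::real))"
  shows "R p \<le> 2*R (m/2) + 2*R h"
proof -
  have mpos: "m > 0" using ab q m by (smt (verit) mult_nonneg_nonneg mult_pos_pos)
  have am: "a < m"
  proof -
    have "m - a = (1-q)*(b-a)" using m by (simp add: algebra_simps)
    moreover have "(1-q)*(b-a) > 0" using ab q by simp
    ultimately show ?thesis by simp
  qed
  have hb: "h \<le> b"
  proof -
    have "b*m - h*m = b*(q*a+(1-q)*b) - (q*a^2+(1-q)*b^2)" using hm m by simp
    also have "\<dots> = q*a*(b-a)" by (simp add: power2_eq_square algebra_simps)
    finally have e: "b*m - h*m = q*a*(b-a)" .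
    have "q*a*(b-a) \<ge> 0" using ab q by simp
    hence "h*m \<le> b*m" using e by simp
    thus ?thesis using mpos by simp
  qed
  have ha: "a < h"
  proof -
    have "h*m - a*m = (q*a^2+(1-q)*b^2) - a*(q*a+(1-q)*b)" using hm m by simp
    also have "\<dots> = (1-q)*b*(b-a)" by (simp add: power2_eq_square algebra_simps)
    finally have "h*m - a*m = (1-q)*b*(b-a)" .
    moreover have "(1-q)*b*(b-a) > 0" using ab q by simp
    ultimately show ?thesis using mpos by (smt (verit) mult_right_mono)
  qed
  have Rh: "R h = h*(1-q)" using ha hb unfolding R_def by simp
  define t where "t = (1-q)*b"
  have qa1: "q*a \<le> a" using ab q by (simp add: mult_left_le_one_le)
  have qa0: "q*a \<ge> 0" using ab q by simp
  have t1: "t \<ge> m - a" using m qa1 unfolding t_def by simp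
  have t2: "t \<le> m" using m qa0 unfolding t_def by simp
  have hq: "h*(1-q) \<ge> t^2/m"
  proof -
    have "h*(1-q)*m = (1-q)*(h*m)" by (simp add: algebra_simps)
    also have "\<dots> = (1-q)*(q*a^2+(1-q)*b^2)" using hm by simp
    also have "\<dots> = t^2 + (1-q)*q*a^2" unfolding t_def by (simp add: power2_eq_square algebra_simps)
    also have "\<dots> \<ge> t^2" using q by simp
    finally have "h*(1-q)*m \<ge> t^2" by simp
    thus ?thesis using mpos by (simp add: divide_le_eq mult.commute)
  qed
  have mb: "m \<le> b"
  proof -
    have "b - m = q*(b-a)" using m by (simp add: algebra_simps)
    moreover have "q*(b-a) \<ge> 0" using ab q by simp
    ultimately show ?thesis by simp
  qed
  have R2: "R (m/2) \<ge> m/2*(1-q)" using am mpos ab q mb unfolding R_def by auto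
  have hq0: "h*(1-q) \<ge> 0" using ha ab q by simp
  have R20: "m/2*(1-q) \<ge> 0" using mpos q by simp
  show ?thesis
  proof (cases "p \<le> a")
    case True
    hence Rp: "R p \<le> a" using p unfolding R_def by simp
    show ?thesis
    proof (cases "a \<ge> m/2")
      case True
      hence "R (m/2) = m/2" unfolding R_def by simp
      thus ?thesis using Rp am Rh hq0 by linarith
    next
      case False
      have "t > m/2" using t1 False by simp
      hence "t^2 > (m/2)^2" using mpos power_strict_mono[of "m/2" t 2] by simp
      hence "t^2/m > m/4" using mpos by (simp add: field_simps power2_eq_square)
      thus ?thesis using Rp hq False R2 Rh R20 by linarith
    qed
  next
    case False
    show ?thesis
    proof (cases "p \<le> b")
      case True
      hence Rp: "R p \<le> t" using False p q unfolding R_def t_def by (simp add: mult_right_mono mult.commute)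
      show ?thesis
      proof (cases "t \<ge> m/2")
        case True
        have "t^2/m \<ge> t/2" using True mpos t2 by (simp add: field_simps power2_eq_square mult_right_mono)
        thus ?thesis using Rp hq R2 Rh R20 by linarith
      next
        case False
        have "m = q*a + t" using m t_def by simp
        hence "q*a > m/2" using False by linarith
        hence "a \<ge> m/2" using qa1 by linarith
        hence "R (m/2) = m/2" unfolding R_def by simp
        thus ?thesis using Rp t2 Rh hq0 by linarith
      qed
    next
      case False
      hence "R p = 0" using \<open>\<not> p \<le> a\<close> unfolding R_def by simp
      thus ?thesis using R2 Rh hq0 R20 by linarith
    qed
  qed
qed

lemma prob_two:
  fixes F :: "real pmf" and a b p :: real
  assumes S: "set_pmf F = {a,b}" and ab: "a < b" and pb: "pmf F b = 1 - pmf F a"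
  shows "measure_pmf.prob F {x. x \<ge> p} = (if p\<le>a then 1 else if p\<le>b then 1 - pmf F a else 0)"
proof -
  have "measure_pmf.prob F {x. x \<ge> p} = measure_pmf.prob F ({x. x \<ge> p} \<inter> set_pmf F)"
    by (simp add: measure_Int_set_pmf)
  also have "\<dots> = sum (pmf F) ({x. x \<ge> p} \<inter> {a,b})"
    using S by (simp add: measure_measure_pmf_finite)
  also have "\<dots> = (if p\<le>a then 1 else if p\<le>b then 1 - pmf F a else 0)"
  proof -
    consider "p \<le> a" | "a < p" "p \<le> b" | "b < p" by linarith
    thus ?thesis
    proof cases
      case 1
      hence "{x. x \<ge> p} \<inter> {a,b} = {a,b}" using ab by auto
      thus ?thesis using 1 ab pb by simp
    next
      case 2
      hence "{x. x \<ge> p} \<inter> {a,b} = {b}" using ab by auto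
      thus ?thesis using 2 ab pb by simp
    next
      case 3
      hence "{x. x \<ge> p} \<inter> {a,b} = {}" using ab by auto
      thus ?thesis using 3 ab pb by simp
    qed
  qed
  finally show ?thesis .
qed

theorem proposition2:
  fixes \<mu> \<sigma> :: real and F :: "real pmf"
  assumes "\<mu> > 0" and "\<sigma> \<ge> 0"
    and "set_pmf F \<subseteq> {0..}"
    and "card (set_pmf F) = 2"
    and "measure_pmf.expectation F (\<lambda>x. x) = \<mu>"
    and "measure_pmf.variance F (\<lambda>x. x) = \<sigma>^2"
  shows "REV_mech (mechA \<mu> \<sigma>) F \<ge> OPT F / 4"
proof -
  obtain x y where xy: "set_pmf F = {x,y}" "x \<noteq> y" using assms(4) by (auto simp: card_2_iff)
  define a where "a = min x y"
  define b where "b = max x y"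
  have S: "set_pmf F = {a,b}" using xy unfolding a_def b_def by (auto simp: min_def max_def)
  have ab: "a < b" using xy unfolding a_def b_def by (auto simp: min_def max_def)
  have a0: "a \<ge> 0" using assms(3) S by auto
  define q where "q = pmf F a"
  have s1: "pmf F a + pmf F b = 1" using sum_pmf_eq_1[of "{a,b}" F] S ab by simp
  have pb: "pmf F b = 1 - q" using s1 q_def by simp
  have q0: "q > 0" using S q_def by (simp add: pmf_positive)
  have q1: "q < 1" using S pb by (smt (verit) pmf_positive insertCI)
  have E: "measure_pmf.expectation F (\<lambda>x. x) = a*q + b*(1-q)"
    using S ab pb q_def by (subst integral_measure_pmf_real[of "{a,b}"]) auto
  have m: "\<mu> = q*a + (1-q)*b" using E assms(5) by (simp add: algebra_simps)
  have V: "measure_pmf.variance F (\<lambda>x. x) = (a-\<mu>)^2*q + (b-\<mu>)^2*(1-q)"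
    using S ab pb q_def assms(5) by (subst integral_measure_pmf_real[of "{a,b}"]) auto
  define h where "h = \<mu> + \<sigma>^2/\<mu>"
  have hm: "h*\<mu> = q*a^2 + (1-q)*b^2"
  proof -
    have "h*\<mu> = \<mu>^2 + \<sigma>^2" unfolding h_def using assms(1) by (simp add: field_simps power2_eq_square)
    also have "\<dots> = \<mu>^2 + ((a-\<mu>)^2*q + (b-\<mu>)^2*(1-q))" using V assms(6) by simp
    also have "\<dots> = q*a^2 + (1-q)*b^2 + 2*\<mu>*\<mu> - 2*\<mu>*(q*a + (1-q)*b)"
      by (simp add: power2_eq_square algebra_simps)
    also have "\<dots> = q*a^2 + (1-q)*b^2" using m by simp
    finally show ?thesis .
  qed
  define R where "R \<equiv> \<lambda>x::real. x*(if x\<le>a then 1 else if x\<le>b then 1-q else (0::real))"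
  have REVR: "REV p F = R p" for p
    unfolding REV_def R_def using prob_two[OF S ab] pb q_def by simp
  have mech: "REV_mech (mechA \<mu> \<sigma>) F = REV (\<mu>/2) F / 2 + REV h F / 2"
    unfolding REV_mech_def mechA_def h_def by simp
  have bound: "REV p F \<le> 4 * REV_mech (mechA \<mu> \<sigma>) F" if "p \<in> {0..}" for p
    using key[OF a0 ab q0 q1 m hm, of p] that unfolding mech REVR R_def by simp
  have "OPT F \<le> 4 * REV_mech (mechA \<mu> \<sigma>) F"
    unfolding OPT_def by (rule cSUP_least) (use bound in auto)
  thus ?thesis by simp
qed

end
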